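(* Let $p$ be a prime, let $\alpha\in\mathbb{N}$, $m,n\in\mathbb{Z}^+$ and $r\in\mathbb{Z}$. Then $$\operatorname{ord}_p\Bigg(\frac{p^{m-1}}m\sum_{k=0}^n\binom nk(-1)^kB_m\Big(\Big\lfloor\frac{k-r}{p^{\alpha}}\Big\rfloor\Big)\Bigg)\geqslant\sum_{i=\alpha}^{\infty}\Big\lfloor\frac{n-1}{p^i}\Big\rfloor+\tau_p\big(\{r-1\}_{p^{\alpha-1}},\{n-r\}_{p^{\alpha-1}}\big),$$ where $B_m(x)$ is the $m$-th Bernoulli polynomial.
   Context: $\operatorname{ord}_p$ is the $p$-adic order ($\operatorname{ord}_p(0)=+\infty$). For an integer $a$ and positive real $m'$, $\{a\}_{m'}$ is the unique number in $[0,m')$ with $a-\{a\}_{m'}\in m'\mathbb{Z}$. $\tau_p(a,b)$ is the number of carries when adding $a,b\in\mathbb{N}$ in base $p$. *)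

theory Defs
  imports Complex_Main "HOL-Computational_Algebra.Computational_Algebra" "HOL-Library.Extended_Real"
begin

text \<open>Bernoulli numbers (convention B_1 = -1/2):
  B_0 = 1 and sum_{k=0}^{n} C(n+1,k) B_k = 0 for n >= 1.\<close>
fun bernoulli :: "nat \<Rightarrow> rat" where
  "bernoulli n = (if n = 0 then 1
     else - (\<Sum>k<n. of_nat ((n + 1) choose k) * bernoulli k) / of_nat (n + 1))"

declare bernoulli.simps [simp del]

definition bernpoly :: "nat \<Rightarrow> rat \<Rightarrow> rat" where
  "bernpoly m x = (\<Sum>k\<le>m. of_nat (m choose k) * bernoulli k * x ^ (m - k))"

definition padic_ord :: "nat \<Rightarrow> rat \<Rightarrow> ereal" where
  "padic_ord p q = (if q = 0 then \<infinity>
     else ereal (real (multiplicity (int p) (fst (quotient_of q)))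
                 - real (multiplicity (int p) (snd (quotient_of q)))))"

text \<open>{a}_{m'}: the unique number in [0,m') with a - {a}_{m'} in m' Z.\<close>
definition lres :: "int \<Rightarrow> real \<Rightarrow> real" where
  "lres a m' = of_int a - m' * of_int \<lfloor>of_int a / m'\<rfloor>"

text \<open>Number of carries when adding a and b in base p: a carry out of digit
  position i occurs iff (a mod p^(i+1)) + (b mod p^(i+1)) >= p^(i+1).\<close>
definition carries :: "nat \<Rightarrow> nat \<Rightarrow> nat \<Rightarrow> nat" where
  "carries p a b = card {i. a mod p ^ (i + 1) + b mod p ^ (i + 1) \<ge> p ^ (i + 1)}"

end

theory Submission
  imports Defs
begin

definition wt :: "nat \<Rightarrow> nat \<Rightarrow> int \<Rightarrow> nat \<Rightarrow> nat \<Rightarrow> int" where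
  "wt p a c e j = (if int p ^ a dvd (int j - c) then (int p * ((int j - c) div int p ^ a)) ^ e else 0)"

definition wm :: "nat \<Rightarrow> nat \<Rightarrow> int poly \<Rightarrow> int \<Rightarrow> nat \<Rightarrow> int" where
  "wm p a A c e = (\<Sum>j\<le>degree A. coeff A j * wt p a c e j)"

lemma wm_ext: "degree A \<le> D \<Longrightarrow> wm p a A c e = (\<Sum>j\<le>D. coeff A j * wt p a c e j)"
  unfolding wm_def by (rule sum.mono_neutral_left) (auto simp: coeff_eq_0)

lemma wm_0[simp]: "wm p a 0 c e = 0"
  by (simp add: wm_def)

lemma wm_add: "wm p a (A + B) c e = wm p a A c e + wm p a B c e"
proof -
  let ?D = "max (degree A) (degree B)"
  have "degree (A + B) \<le> ?D" by (rule degree_add_le) auto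
  then show ?thesis
    by (simp add: wm_ext[of _ ?D] sum.distrib algebra_simps)
qed

lemma wm_smult: "wm p a (smult b A) c e = b * wm p a A c e"
proof -
  have "degree (smult b A) \<le> degree A" by (rule degree_smult_le)
  then show ?thesis by (simp add: wm_ext[of _ "degree A"] wm_def sum_distrib_left algebra_simps)
qed

lemma wm_sum: "finite I \<Longrightarrow> wm p a (\<Sum>i\<in>I. f i) c e = (\<Sum>i\<in>I. wm p a (f i) c e)"
  by (induction I rule: finite_induct) (auto simp: wm_add)

lemma wm_monom_mult: "wm p a (monom 1 d * A) c e = wm p a A (c - int d) e"
proof -
  let ?D = "degree A"
  have deg: "degree (monom 1 d * A) \<le> ?D + d"
    using degree_mult_le[of "monom 1 d" A] by (simp add: degree_monom_le add.commute)
       (meson add_le_mono degree_monom_le le_refl order_trans degree_mult_le)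
  have "wm p a (monom 1 d * A) c e = (\<Sum>j\<le>?D + d. coeff (monom 1 d * A) j * wt p a c e j)"
    by (rule wm_ext[OF deg])
  also have "\<dots> = (\<Sum>j\<in>{d..?D + d}. coeff A (j - d) * wt p a c e j)"
    by (rule sum.mono_neutral_cong_right) (auto simp: coeff_monom_mult)
  also have "\<dots> = (\<Sum>j\<in>{0 + d..?D + d}. coeff A (j - d) * wt p a c e j)" by simp
  also have "\<dots> = (\<Sum>i=0..?D. coeff A i * wt p a c e (i + d))"
    by (subst sum.shift_bounds_cl_nat_ivl) simp
  also have "\<dots> = (\<Sum>i\<le>?D. coeff A i * wt p a (c - int d) e i)"
    by (rule sum.cong) (auto simp: wt_def algebra_simps)
  also have "\<dots> = wm p a A (c - int d) e" by (simp add: wm_def)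
  finally show ?thesis .
qed

lemma wm_mult: "wm p a (B * A) c e = (\<Sum>d\<le>degree B. coeff B d * wm p a A (c - int d) e)"
proof -
  have "B * A = (\<Sum>d\<le>degree B. monom (coeff B d) d) * A" by (simp add: poly_as_sum_of_monoms)
  also have "\<dots> = (\<Sum>d\<le>degree B. smult (coeff B d) (monom 1 d * A))"
    by (simp add: sum_distrib_right smult_monom_mult)
  finally show ?thesis by (simp add: wm_sum wm_smult wm_monom_mult)
qed

lemma coeff_pcomp:
  fixes A :: "'a::comm_semiring_1 poly"
  assumes "p > 0"
  shows "coeff (pcompose A (monom 1 p)) j = (if p dvd j then coeff A (j div p) else 0)"
proof (induction A arbitrary: j rule: pCons_induct)
  case 0
  then show ?case by simp
next
  case (pCons a A)
  have eq: "coeff (pcompose (pCons a A) (monom 1 p)) j = coeff [:a:] j + coeff (monom 1 p * pcompose A (monom 1 p)) j"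
    by (simp add: pcompose_pCons)
  show ?case
  proof (cases "j < p")
    case True
    show ?thesis
    proof (cases "j = 0")
      case True
      then show ?thesis using assms by (simp add: eq coeff_monom_mult)
    next
      case False
      then have "\<not> p dvd j" using \<open>j < p\<close> by (auto dest: dvd_imp_le)
      then show ?thesis using False True by (simp add: eq coeff_monom_mult coeff_pCons split: nat.splits)
    qed
  next
    case False
    then have d: "p dvd j \<longleftrightarrow> p dvd (j - p)" using dvd_minus_self by auto
    have q: "j div p = Suc ((j - p) div p)" using False assms by (simp add: le_div_geq)
    have c0: "coeff [:a:] j = 0" using False assms by (simp add: coeff_pCons split: nat.splits)
    have m: "coeff (monom 1 p * pcompose A (monom 1 p)) j = coeff (pcompose A (monom 1 p)) (j - p)"
      using False by (simp add: coeff_monom_mult)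
    show ?thesis unfolding eq c0 m pCons.IH[of "j - p"] d q by simp
  qed
qed

lemma sum_multiples:
  fixes p D :: nat
  assumes "p > 0"
  shows "(\<Sum>j\<le>D * p. if p dvd j then g (j div p) else 0) = (\<Sum>i\<le>D. (g i :: int))"
proof -
  have "(\<Sum>j\<le>D * p. if p dvd j then g (j div p) else 0) = (\<Sum>j\<in>{j\<in>{..D*p}. p dvd j}. g (j div p))"
    by (rule sum.inter_filter[symmetric]) simp
  also have "{j\<in>{..D*p}. p dvd j} = (\<lambda>i. p * i) ` {..D}"
  proof (intro equalityI subsetI)
    fix j assume jj: "j \<in> {j\<in>{..D*p}. p dvd j}"
    then have j1: "j \<le> D*p" and j2: "p dvd j" by auto
    from j2 obtain i where ji: "j = p * i" by (rule dvdE)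
    then have "i \<le> D" using j1 assms by (simp add: mult.commute)
    then show "j \<in> (\<lambda>i. p * i) ` {..D}" using ji by auto
  qed (auto simp: mult.commute)
  also have "(\<Sum>j\<in>(\<lambda>i. p * i) ` {..D}. g (j div p)) = (\<Sum>i\<le>D. g (p * i div p))"
    using assms by (subst sum.reindex) (auto simp: inj_on_def)
  also have "\<dots> = (\<Sum>i\<le>D. g i)" using assms by simp
  finally show ?thesis .
qed

lemma wt_pcomp:
  assumes "p > 1"
  shows "wt p (Suc a) c e (p * i) = (if int p dvd c then wt p a (c div int p) e i else 0)"
proof (cases "int p dvd c")
  case True
  then obtain c' where c: "c = int p * c'" by blast
  have pz: "int p \<noteq> 0" using assms by simp
  have "int (p * i) - c = int p * (int i - c')" by (simp add: c algebra_simps)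
  moreover have "int p ^ Suc a dvd int p * (int i - c') \<longleftrightarrow> int p ^ a dvd (int i - c')"
    using pz by simp
  moreover have "int p * (int i - c') div int p ^ Suc a = (int i - c') div int p ^ a"
    using pz by (simp add: div_mult_mult1 power_Suc)
  ultimately show ?thesis using True pz by (simp add: wt_def c)
next
  case False
  have "\<not> int p ^ Suc a dvd int (p * i) - c"
  proof
    assume "int p ^ Suc a dvd int (p * i) - c"
    moreover have "int p dvd int p ^ Suc a" by simp
    ultimately have "int p dvd int (p * i) - c" using dvd_trans by blast
    then have h: "int p dvd int p * int i - c" by simp
    have "int p dvd int p * int i - (int p * int i - c)"
      by (rule dvd_diff[OF _ h]) simp
    then show False using False by simp
  qed
  then show ?thesis using False by (simp add: wt_def)
qed

lemma wm_pcomp: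
  assumes "p > 1"
  shows "wm p (Suc a) (pcompose A (monom 1 p)) c e = (if int p dvd c then wm p a A (c div int p) e else 0)"
proof -
  have p0: "p > 0" using assms by simp
  have deg: "degree (pcompose A (monom 1 p)) = degree A * p"
    by (simp add: degree_pcompose degree_monom_eq)
  have "wm p (Suc a) (pcompose A (monom 1 p)) c e =
        (\<Sum>j\<le>degree A * p. if p dvd j then coeff A (j div p) * wt p (Suc a) c e (p * (j div p)) else 0)"
    unfolding wm_def deg
    by (rule sum.cong) (auto simp: coeff_pcomp[OF p0])
  also have "\<dots> = (\<Sum>i\<le>degree A. coeff A i * wt p (Suc a) c e (p * i))"
    by (rule sum_multiples[OF p0])
  also have "\<dots> = (if int p dvd c then wm p a A (c div int p) e else 0)"
    by (simp add: wt_pcomp[OF assms] wm_def)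
  finally show ?thesis .
qed

definition L :: "nat \<Rightarrow> nat \<Rightarrow> nat" where "L p M = multiplicity p (fact M :: nat)"
definition leg :: "nat \<Rightarrow> nat \<Rightarrow> nat" where "leg p M = (\<Sum>k\<in>{1..M}. M div p ^ k)"

lemma pow_gt: "p > 1 \<Longrightarrow> k < (p::nat) ^ k"
proof (induction k)
  case 0 then show ?case by simp
next
  case (Suc k)
  then have "p ^ Suc k \<ge> 2 * p ^ k" by simp
  then show ?case using Suc by linarith
qed

lemma leg_ext: assumes "p > 1" "M \<le> B" shows "leg p M = (\<Sum>k\<in>{1..B}. M div p ^ k)"
  unfolding leg_def
proof (rule sum.mono_neutral_left)
  show "\<forall>i\<in>{1..B} - {1..M}. M div p ^ i = 0"
  proof
    fix i assume "i \<in> {1..B} - {1..M}"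
    then have "M < i" by auto
    then have "M < p ^ i" using pow_gt[OF assms(1), of i] by linarith
    then show "M div p ^ i = 0" by simp
  qed
qed (use assms in auto)

lemma sum_ind_card: "finite A \<Longrightarrow> (\<Sum>x\<in>A. if P x then 1 else 0 :: nat) = card {x\<in>A. P x}"
  by (simp add: sum.inter_filter[symmetric])

lemma L_Suc: assumes "prime p" shows "L p (Suc M) = multiplicity p (Suc M) + L p M"
proof -
  have "fact (Suc M) = Suc M * (fact M :: nat)" by simp
  then show ?thesis unfolding L_def
    using prime_elem_multiplicity_mult_distrib[of p "Suc M" "fact M :: nat"] assms by simp
qed

lemma card_dvd_mult:
  fixes p m B :: nat
  assumes "prime p" "m > 0" "m \<le> B"
  shows "card {k\<in>{1..B}. p ^ k dvd m} = multiplicity p m"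
proof -
  have np: "\<not> is_unit p" using prime_gt_1_nat[OF assms(1)] by simp
  have "p ^ multiplicity p m dvd m" by (rule multiplicity_dvd)
  then have "p ^ multiplicity p m \<le> m" using assms(2) by (rule dvd_imp_le)
  moreover have "multiplicity p m < p ^ multiplicity p m"
    by (rule pow_gt[OF prime_gt_1_nat[OF assms(1)]])
  ultimately have mB: "multiplicity p m \<le> B" using assms(3) by linarith
  have iff: "p ^ k dvd m \<longleftrightarrow> k \<le> multiplicity p m" for k
    using power_dvd_iff_le_multiplicity[of m p k] assms(2) np by simp
  have "{k\<in>{1..B}. p ^ k dvd m} = {1..multiplicity p m}"
    unfolding iff using mB by auto
  then show ?thesis by simp
qed

lemma div_Suc_ind: "(q::nat) > 0 \<Longrightarrow> Suc M div q = M div q + (if q dvd Suc M then 1 else 0)"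
  by (auto simp add: div_Suc dvd_eq_mod_eq_0)

lemma L_eq_leg: assumes "prime p" shows "L p M = leg p M"
proof (induction M)
  case 0
  then show ?case by (simp add: L_def leg_def)
next
  case (Suc M)
  have p1: "p > 1" using assms by (rule prime_gt_1_nat)
  have "leg p (Suc M) = (\<Sum>k\<in>{1..Suc M}. M div p ^ k + (if p ^ k dvd Suc M then 1 else 0))"
    unfolding leg_def using p1 by (intro sum.cong) (auto simp: div_Suc_ind)
  also have "\<dots> = (\<Sum>k\<in>{1..Suc M}. M div p ^ k) + card {k\<in>{1..Suc M}. p ^ k dvd Suc M}"
    by (simp only: sum.distrib sum_ind_card[OF finite_atLeastAtMost])
  also have "(\<Sum>k\<in>{1..Suc M}. M div p ^ k) = leg p M"
    using leg_ext[OF p1, of M "Suc M"] by simp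
  also have "card {k\<in>{1..Suc M}. p ^ k dvd Suc M} = multiplicity p (Suc M)"
    by (rule card_dvd_mult[OF assms]) auto
  finally show ?case using Suc L_Suc[OF assms, of M] by simp
qed

lemma leg_rec: assumes "p > 1" shows "leg p M = M div p + leg p (M div p)"
proof (cases "M = 0")
  case True then show ?thesis by (simp add: leg_def)
next
  case False
  have "leg p M = (\<Sum>k\<in>{1..Suc M}. M div p ^ k)" using leg_ext[OF assms, of M "Suc M"] by simp
  also have "\<dots> = M div p + (\<Sum>k\<in>{2..Suc M}. M div p ^ k)"
  proof -
    have "{1..Suc M} = insert 1 {2..Suc M}" by auto
    then show ?thesis by simp
  qed
  also have "(\<Sum>k\<in>{2..Suc M}. M div p ^ k) = (\<Sum>k\<in>{1..M}. M div p ^ Suc k)"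
  proof -
    have "(\<Sum>k\<in>{2..Suc M}. M div p ^ k) = (\<Sum>k\<in>{1 + 1..M + 1}. M div p ^ k)" by (simp add: numeral_2_eq_2)
    also have "\<dots> = (\<Sum>k\<in>{1..M}. M div p ^ (k + 1))" by (rule sum.shift_bounds_cl_nat_ivl)
    finally show ?thesis by simp
  qed
  also have "\<dots> = (\<Sum>k\<in>{1..M}. (M div p) div p ^ k)"
    by (intro sum.cong) (auto simp: div_mult2_eq)
  also have "\<dots> = leg p (M div p)"
    using leg_ext[OF assms, of "M div p" M] by simp
  finally show ?thesis .
qed

lemma leg_bound: assumes "p > 1" "M \<ge> 1" shows "(p - 1) * leg p M \<le> M - 1"
  using assms(2)
proof (induction M rule: less_induct)
  case (less M)
  show ?case
  proof (cases "M div p = 0")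
    case True
    then show ?thesis using leg_rec[OF assms(1), of M] by (simp add: leg_def)
  next
    case False
    have lt: "M div p < M" using less.prems assms(1) by simp
    have IH: "(p - 1) * leg p (M div p) \<le> M div p - 1" using less.IH[OF lt] False by simp
    have "(p - 1) * leg p M = (p - 1) * (M div p) + (p - 1) * leg p (M div p)"
      using leg_rec[OF assms(1), of M] by (simp add: algebra_simps)
    also have "\<dots> \<le> (p - 1) * (M div p) + (M div p - 1)" using IH by simp
    also have "\<dots> = p * (M div p) - 1"
    proof -
      define X where "X = M div p"
      have X1: "X \<ge> 1" using False X_def by simp
      have e1: "(p - 1) * X + X = p * X" using assms(1) by (cases p) auto
      show ?thesis unfolding X_def[symmetric] using e1 X1 by linarith
    qed
    also have "p * (M div p) \<le> M" by simp
    finally show ?thesis using False by linarith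
  qed
qed

lemma L_le: assumes "prime p" "i \<ge> 1" shows "L p i \<le> i - 1"
proof -
  have p1: "p > 1" using prime_gt_1_nat[OF assms(1)] .
  have "(p - 1) * leg p i \<le> i - 1" by (rule leg_bound[OF p1 assms(2)])
  moreover have "1 \<le> p - 1" using p1 by simp
  then have "leg p i \<le> (p - 1) * leg p i" using mult_le_mono1[of 1 "p - 1" "leg p i"] by simp
  ultimately show ?thesis using L_eq_leg[OF assms(1), of i] by linarith
qed

lemma L_binom: assumes "prime p" "k \<le> n"
  shows "L p n = multiplicity p (n choose k) + L p k + L p (n - k)"
proof -
  have e: "fact k * fact (n - k) * (n choose k) = (fact n :: nat)" by (rule binomial_fact_lemma[OF assms(2)])
  have "(n choose k) > 0" using assms(2) by simp
  then have nz: "(n choose k) \<noteq> 0" by simp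
  have pe: "prime_elem p" using assms(1) by simp
  have "L p n = multiplicity p (fact k * fact (n - k) * (n choose k) :: nat)" unfolding L_def e ..
  also have "\<dots> = multiplicity p (fact k * fact (n - k) :: nat) + multiplicity p (n choose k)"
    by (rule prime_elem_multiplicity_mult_distrib[OF pe _ nz]) simp
  also have "multiplicity p (fact k * fact (n - k) :: nat) = L p k + L p (n - k)"
    unfolding L_def by (rule prime_elem_multiplicity_mult_distrib[OF pe]) auto
  finally show ?thesis by simp
qed

lemma div_split3: assumes "(q::nat) > 0" "d \<le> N"
  shows "N div q = d div q + (N - d) div q + (if d mod q > N mod q then 1 else 0)"
proof -
  define a r b s where "a = d div q" "r = d mod q" "b = (N - d) div q" "s = (N - d) mod q"
  have d: "d = q * a + r" and e: "N - d = q * b + s" unfolding a_r_b_s_def by simp_all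
  have r: "r < q" and s: "s < q" unfolding a_r_b_s_def using assms by simp_all
  have N: "N = q * (a + b) + (r + s)" using d e assms(2) by (simp add: algebra_simps)
  show ?thesis
  proof (cases "r + s \<ge> q")
    case True
    have N': "N = (r + s - q) + (a + b + 1) * q" using N True by (simp add: algebra_simps)
    have lt: "r + s - q < q" using r s by linarith
    have "N div q = a + b + 1" "N mod q = r + s - q"
      unfolding N' using lt assms(1) by (simp_all only: div_mult_self1 mod_mult_self1 div_less mod_less)
    then show ?thesis using r s True unfolding a_r_b_s_def[symmetric] by auto
  next
    case False
    have N': "N = (r + s) + (a + b) * q" using N by (simp add: algebra_simps)
    have lt: "r + s < q" using False by linarith
    have "N div q = a + b" "N mod q = r + s"
      unfolding N' using lt assms(1) by (simp_all only: div_mult_self1 mod_mult_self1 div_less mod_less)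
    then show ?thesis using False unfolding a_r_b_s_def[symmetric] by auto
  qed
qed

lemma kummer_lower:
  fixes p d N :: nat
  assumes "prime p" "d \<le> N"
  shows "card {k\<in>{1..\<beta>}. d mod p ^ k > N mod p ^ k} \<le> multiplicity p (N choose d)"
proof -
  have p1: "p > 1" using prime_gt_1_nat[OF assms(1)] .
  define B where "B = max N \<beta>"
  have "leg p N = (\<Sum>k\<in>{1..B}. N div p ^ k)" using leg_ext[OF p1] B_def by simp
  also have "\<dots> = (\<Sum>k\<in>{1..B}. d div p ^ k + (N - d) div p ^ k + (if d mod p ^ k > N mod p ^ k then 1 else 0))"
    using p1 assms(2) by (intro sum.cong refl div_split3) auto
  also have "\<dots> = leg p d + leg p (N - d) + card {k\<in>{1..B}. d mod p ^ k > N mod p ^ k}"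
    using leg_ext[OF p1, of d B] leg_ext[OF p1, of "N - d" B] assms(2) B_def
    by (simp only: sum.distrib sum_ind_card[OF finite_atLeastAtMost])
  finally have "multiplicity p (N choose d) = card {k\<in>{1..B}. d mod p ^ k > N mod p ^ k}"
    using L_binom[OF assms] L_eq_leg[OF assms(1)] by simp
  moreover have "card {k\<in>{1..\<beta>}. d mod p ^ k > N mod p ^ k} \<le> card {k\<in>{1..B}. d mod p ^ k > N mod p ^ k}"
    by (rule card_mono) (auto simp: B_def)
  ultimately show ?thesis by simp
qed

definition Tc :: "nat \<Rightarrow> nat \<Rightarrow> int \<Rightarrow> int \<Rightarrow> nat" where
  "Tc p b a n = card {k\<in>{1..b}. a mod int p ^ k > n mod int p ^ k}"

lemma Tc_le: "Tc p b a n \<le> b"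
proof -
  have "Tc p b a n \<le> card {1..b}" unfolding Tc_def by (rule card_mono) auto
  then show ?thesis by simp
qed

lemma Tc_nat: "Tc p b (int d) (int N) = card {k\<in>{1..b}. d mod p ^ k > N mod p ^ k}"
proof -
  have "(int d mod int p ^ k > int N mod int p ^ k) \<longleftrightarrow> (d mod p ^ k > N mod p ^ k)" for k
    by (metis of_nat_less_iff of_nat_power zmod_int)
  then show ?thesis unfolding Tc_def by simp
qed

lemma carry_lemma:
  fixes p :: nat and c d c2 N N0 M :: int
  assumes p1: "p > 1"
    and hN: "\<And>k. k \<in> {1..Suc a} \<Longrightarrow> N mod int p ^ k = N0 mod int p ^ k"
    and hc: "c = d + int p * c2"
    and hM: "\<And>k. k \<in> {1..a} \<Longrightarrow> M mod int p ^ k = 0"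
  shows "Tc p (Suc a) c N \<le> Tc p (Suc a) d N0 + Tc p a c2 M"
proof -
  let ?S = "{k\<in>{1..Suc a}. c mod int p ^ k > N mod int p ^ k}"
  let ?S1 = "{k\<in>{1..Suc a}. d mod int p ^ k > N0 mod int p ^ k}"
  let ?S2 = "{k\<in>{1..a}. c2 mod int p ^ k > M mod int p ^ k}"
  have sub: "?S \<subseteq> ?S1 \<union> Suc ` ?S2"
  proof
    fix k assume kS: "k \<in> ?S"
    show "k \<in> ?S1 \<union> Suc ` ?S2"
    proof (cases "k \<in> ?S1")
      case True then show ?thesis by simp
    next
      case False
      have k1: "k \<in> {1..Suc a}" and lt: "c mod int p ^ k > N mod int p ^ k" using kS by auto
      have "d mod int p ^ k \<le> N0 mod int p ^ k" using False k1 by auto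
      then have "c mod int p ^ k \<noteq> d mod int p ^ k" using lt hN[OF k1] by linarith
      then have nd: "\<not> int p ^ k dvd int p * c2" using hc by (auto simp: mod_eq_dvd_iff)
      obtain k' where kk: "k = Suc k'" using k1 by (cases k) auto
      have k'0: "k' \<noteq> 0"
      proof
        assume "k' = 0"
        then have "int p ^ k dvd int p * c2" using kk by simp
        then show False using nd by simp
      qed
      have nd2: "\<not> int p ^ k' dvd c2"
      proof
        assume "int p ^ k' dvd c2"
        then have "int p * int p ^ k' dvd int p * c2" by (rule mult_dvd_mono[OF dvd_refl])
        then show False using nd kk by simp
      qed
      have "c2 mod int p ^ k' \<noteq> 0" using nd2 by (simp add: dvd_eq_mod_eq_0)
      moreover have "c2 mod int p ^ k' \<ge> 0" using p1 by simp
      ultimately have "c2 mod int p ^ k' > 0" by linarith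
      moreover have k'r: "k' \<in> {1..a}" using k'0 k1 kk by auto
      ultimately have "k' \<in> ?S2" using hM[OF k'r] by simp
      then show ?thesis using kk by blast
    qed
  qed
  have "Tc p (Suc a) c N = card ?S" by (simp add: Tc_def)
  also have "\<dots> \<le> card (?S1 \<union> Suc ` ?S2)" by (rule card_mono[OF _ sub]) simp
  also have "\<dots> \<le> card ?S1 + card (Suc ` ?S2)" by (rule card_Un_le)
  also have "card (Suc ` ?S2) \<le> card ?S2" by (rule card_image_le) simp
  finally show ?thesis by (simp add: Tc_def)
qed

lemma coeff_om: "coeff ([:1, -1:] ^ N :: int poly) j = (-1) ^ j * int (N choose j)"
proof (induction N arbitrary: j)
  case 0
  then show ?case by (cases j) auto
next
  case (Suc N)
  have e: "[:1, -1:] ^ Suc N = [:1, -1:] ^ N + pCons 0 (- ([:1, -1:] ^ N) :: int poly)"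
    by (simp add: mult_pCons_left)
  show ?case
  proof (cases j)
    case 0
    then show ?thesis unfolding e using Suc by simp
  next
    case (Suc i)
    then show ?thesis unfolding e using Suc.IH by (simp add: algebra_simps)
  qed
qed

lemma degree_om: "degree ([:1, -1:] ^ N :: int poly) = N"
  by (subst degree_power_eq) auto

definition momq :: "int \<Rightarrow> nat \<Rightarrow> int \<Rightarrow> nat \<Rightarrow> int" where
  "momq q N c e = (\<Sum>j\<le>N. if q dvd (int j - c) then (-1) ^ j * int (N choose j) * (int j - c) ^ e else 0)"

lemma wm1_om: assumes "p > 0" shows "wm p 1 ([:1, -1:] ^ N) c e = momq (int p) N c e"
  unfolding wm_def momq_def degree_om
  by (intro sum.cong refl) (auto simp: wt_def coeff_om)

lemma wm0_om: "wm p 0 ([:1, -1:] ^ N) c e = int p ^ e * momq 1 N c e"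
  unfolding wm_def momq_def degree_om sum_distrib_left
  by (intro sum.cong refl) (auto simp: wt_def coeff_om power_mult_distrib)

lemma momq_rec:
  "momq q (Suc N) c (Suc e) = - int (Suc N) * momq q N (c - 1) e - c * momq q (Suc N) c e"
proof -
  define f where "f j = (if q dvd (int j - c) then (-1) ^ j * (int (Suc N choose j) * int j) * (int j - c) ^ e else 0)" for j
  have "momq q (Suc N) c (Suc e) + c * momq q (Suc N) c e = (\<Sum>j\<le>Suc N. f j)"
    unfolding momq_def sum_distrib_left sum.distrib[symmetric] f_def
    by (intro sum.cong refl) (auto simp: algebra_simps)
  also have "\<dots> = f 0 + (\<Sum>i\<le>N. f (Suc i))" by (rule sum.atMost_Suc_shift)
  also have "\<dots> = (\<Sum>i\<le>N. - int (Suc N) * (if q dvd (int i - (c - 1)) then (-1) ^ i * int (N choose i) * (int i - (c - 1)) ^ e else 0))"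
  proof -
    have "f (Suc i) = - int (Suc N) * (if q dvd (int i - (c - 1)) then (-1) ^ i * int (N choose i) * (int i - (c - 1)) ^ e else 0)" for i
    proof -
      have b: "int (Suc N choose Suc i) * int (Suc i) = int (Suc N) * int (N choose i)"
        using Suc_times_binomial[of i N] by (metis mult.commute of_nat_mult)
      have "int (Suc i) - c = int i - (c - 1)" by simp
      then show ?thesis unfolding f_def b by (simp add: algebra_simps)
    qed
    then show ?thesis by (simp add: f_def)
  qed
  also have "\<dots> = - int (Suc N) * momq q N (c - 1) e"
    unfolding momq_def sum_distrib_left ..
  finally show ?thesis by (simp add: algebra_simps)
qed

lemma L0[simp]: "L p 0 = 0" by (simp add: L_def)

lemma momq_div:
  assumes "prime p" and base: "\<And>N c. int p ^ L p N dvd momq q N c 0"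
  shows "int p ^ L p N dvd momq q N c e"
proof (induction e arbitrary: N c)
  case 0
  then show ?case by (rule base)
next
  case (Suc e)
  show ?case
  proof (cases N)
    case 0
    then show ?thesis by simp
  next
    case (Suc N')
    have m: "int p ^ multiplicity p (Suc N') dvd int (Suc N')"
      by (metis multiplicity_dvd of_nat_dvd_iff of_nat_power)
    have "int p ^ L p (Suc N') = int p ^ multiplicity p (Suc N') * int p ^ L p N'"
      by (simp add: L_Suc[OF assms(1)] power_add)
    also have "\<dots> dvd int (Suc N') * momq q N' (c - 1) e"
      by (rule mult_dvd_mono[OF m Suc.IH])
    finally have d1: "int p ^ L p (Suc N') dvd - int (Suc N') * momq q N' (c - 1) e"
      by (metis dvd_minus_iff mult_minus_left)
    have d2: "int p ^ L p (Suc N') dvd c * momq q (Suc N') c e"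
      using Suc.IH[of "Suc N'" c] by simp
    show ?thesis unfolding Suc momq_rec using d1 d2 by (rule dvd_diff)
  qed
qed

lemma momq1_zero: "e < N \<Longrightarrow> momq 1 N c e = 0"
proof (induction e arbitrary: N c)
  case 0
  then have "momq 1 N c 0 = (\<Sum>j\<le>N. (-1) ^ j * of_nat (N choose j))"
    by (simp add: momq_def)
  also have "\<dots> = 0" using 0 by (rule choose_alternating_sum)
  finally show ?case .
next
  case (Suc e)
  then obtain N' where N: "N = Suc N'" by (cases N) auto
  show ?case unfolding N momq_rec using Suc.IH Suc.prems N by simp
qed

lemma binom_pm1:
  assumes "prime p" "d \<le> p - 1"
  shows "int p dvd ((-1) ^ d * int ((p - 1) choose d) - 1)"
  using assms(2)
proof (induction d)
  case 0
  then show ?case by simp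
next
  case (Suc d)
  have p1: "p > 1" using prime_gt_1_nat[OF assms(1)] .
  have ps: "p = Suc (p - 1)" using p1 by simp
  have b: "p choose Suc d = ((p - 1) choose d) + ((p - 1) choose Suc d)"
    by (subst ps) (simp only: binomial_Suc_Suc)
  have dp: "p dvd (p choose Suc d)" using Suc.prems p1 assms(1) by (intro dvd_choose_prime) auto
  then have dp': "int p dvd (-1) ^ Suc d * int (p choose Suc d)"
    by (metis dvd_mult int_dvd_int_iff)
  have IH: "int p dvd (-1) ^ d * int ((p - 1) choose d) - 1" using Suc by simp
  have eqn: "(-1) ^ Suc d * int ((p - 1) choose Suc d) - 1
        = (-1) ^ Suc d * int (p choose Suc d) + ((-1) ^ d * int ((p - 1) choose d) - 1)"
    unfolding b by (simp add: algebra_simps)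
  show ?case unfolding eqn by (rule dvd_add[OF dp' IH])
qed

lemma sum_ind_card_int: "finite A \<Longrightarrow> (\<Sum>x\<in>A. if P x then 1 else 0 :: int) = int (card {x\<in>A. P x})"
  by (simp add: sum.inter_filter[symmetric])

lemma one_class:
  fixes p :: nat and x :: int
  assumes "p > 0"
  shows "(\<Sum>d\<le>p - 1. if int p dvd (x + int d) then 1 else 0) = (1::int)"
proof -
  have set: "{d\<in>{..p - 1}. int p dvd (x + int d)} = {nat ((- x) mod int p)}"
  proof (intro equalityI subsetI)
    fix d assume "d \<in> {d\<in>{..p - 1}. int p dvd (x + int d)}"
    then have d: "d < p" "int p dvd (x + int d)" using assms by auto
    then have "int d mod int p = (- x) mod int p"
      by (metis add.commute diff_minus_eq_add mod_eq_dvd_iff)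
    moreover have "int d mod int p = int d" using d(1) by simp
    ultimately show "d \<in> {nat ((- x) mod int p)}" by simp
  next
    fix d assume "d \<in> {nat ((- x) mod int p)}"
    then have d: "int d = (- x) mod int p" using assms by simp
    have "d < p" using assms d by (metis Euclidean_Rings.pos_mod_bound of_nat_0_less_iff of_nat_less_iff)
    moreover have "int p dvd (x + int d)" unfolding d
      by (metis add.commute diff_minus_eq_add mod_eq_dvd_iff mod_mod_trivial)
    ultimately show "d \<in> {d\<in>{..p - 1}. int p dvd (x + int d)}" by auto
  qed
  show ?thesis by (simp only: sum_ind_card_int[OF finite_atMost] set) simp
qed

lemma sum_classes:
  assumes "p > 0"
  shows "(\<Sum>d\<le>p - 1. wm p 1 A (c - int d) 0) = poly A 1"
proof -
  have "(\<Sum>d\<le>p - 1. wm p 1 A (c - int d) 0)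
      = (\<Sum>j\<le>degree A. coeff A j * (\<Sum>d\<le>p - 1. if int p dvd ((int j - c) + int d) then 1 else 0))"
    unfolding wm_def sum_distrib_left
    by (subst sum.swap) (intro sum.cong refl, auto simp: wt_def algebra_simps)
  also have "\<dots> = (\<Sum>j\<le>degree A. coeff A j)" using one_class[OF assms] by simp
  also have "\<dots> = poly A 1" by (simp add: poly_altdef)
  finally show ?thesis .
qed

lemma fleck:
  assumes "prime p" "K \<ge> 1"
  shows "int p ^ ((K - 1) div (p - 1)) dvd wm p 1 ([:1, -1:] ^ K) c 0"
  using assms(2)
proof (induction K arbitrary: c rule: less_induct)
  case (less K)
  have p1: "p > 1" using prime_gt_1_nat[OF assms(1)] .
  show ?case
  proof (cases "K < p")
    case True
    then have "K - 1 < p - 1" using p1 less.prems by linarith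
    then have "(K - 1) div (p - 1) = 0" by (rule div_less)
    then show ?thesis by simp
  next
    case False
    define K' where "K' = K - (p - 1)"
    have K'1: "K' \<ge> 1" "K' < K" using False p1 less.prems by (auto simp: K'_def)
    have KK: "K = (p - 1) + K'" using False by (simp add: K'_def)
    have ex: "(K - 1) div (p - 1) = Suc ((K' - 1) div (p - 1))"
    proof -
      have "K - 1 = (K' - 1) + 1 * (p - 1)" using KK K'1 by simp
      then show ?thesis using p1 by (simp only: div_mult_self1)
    qed
    let ?B = "[:1, -1:] ^ (p - 1) :: int poly"
    let ?A = "[:1, -1:] ^ K' :: int poly"
    let ?W = "\<lambda>d. wm p 1 ?A (c - int d) 0"
    have "wm p 1 ([:1, -1:] ^ K) c 0 = wm p 1 (?B * ?A) c 0" by (simp add: KK power_add)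
    also have "\<dots> = (\<Sum>d\<le>p - 1. coeff ?B d * ?W d)" by (simp add: wm_mult degree_om)
    also have "\<dots> = (\<Sum>d\<le>p - 1. ?W d) + (\<Sum>d\<le>p - 1. (coeff ?B d - 1) * ?W d)"
      by (simp add: sum.distrib[symmetric] algebra_simps)
    also have "(\<Sum>d\<le>p - 1. ?W d) = 0"
      using sum_classes[of p ?A c] p1 K'1 by (simp add: poly_power)
    finally have eq: "wm p 1 ([:1, -1:] ^ K) c 0 = (\<Sum>d\<le>p - 1. (coeff ?B d - 1) * ?W d)" by simp
    have "int p ^ ((K - 1) div (p - 1)) dvd (coeff ?B d - 1) * ?W d" if "d \<in> {..p - 1}" for d
    proof -
      have "int p dvd coeff ?B d - 1" using binom_pm1[OF assms(1)] that by (simp add: coeff_om)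
      moreover have "int p ^ ((K' - 1) div (p - 1)) dvd ?W d" using less.IH[OF K'1(2) K'1(1)] .
      ultimately have "int p * int p ^ ((K' - 1) div (p - 1)) dvd (coeff ?B d - 1) * ?W d"
        by (rule mult_dvd_mono)
      then show ?thesis unfolding ex by simp
    qed
    then show ?thesis unfolding eq by (rule dvd_sum)
  qed
qed

lemma L_le_fleck: assumes "prime p" "K \<ge> 1" shows "L p K \<le> (K - 1) div (p - 1)"
proof -
  have p1: "p > 1" using prime_gt_1_nat[OF assms(1)] .
  have "(p - 1) * leg p K \<le> K - 1" by (rule leg_bound[OF p1 assms(2)])
  then have "leg p K \<le> (K - 1) div (p - 1)" using p1
    by (simp add: less_eq_div_iff_mult_less_eq mult.commute)
  then show ?thesis using L_eq_leg[OF assms(1)] by simp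
qed

lemma base1:
  assumes "prime p"
  shows "int p ^ L p N dvd wm p 1 ([:1, -1:] ^ N) c e"
proof -
  have p0: "p > 0" using prime_gt_1_nat[OF assms] by simp
  have base: "int p ^ L p N dvd momq (int p) N c 0" for N c
  proof (cases "N = 0")
    case True then show ?thesis by simp
  next
    case False
    then have "int p ^ ((N - 1) div (p - 1)) dvd momq (int p) N c 0"
      using fleck[OF assms, of N c] wm1_om[OF p0] by simp
    moreover have "int p ^ L p N dvd int p ^ ((N - 1) div (p - 1))"
      using L_le_fleck[OF assms, of N] False by (simp add: le_imp_power_dvd)
    ultimately show ?thesis using dvd_trans by blast
  qed
  show ?thesis unfolding wm1_om[OF p0] by (rule momq_div[OF assms base])
qed

lemma base0:
  assumes "prime p"
  shows "int p ^ (N + L p N) dvd wm p 0 ([:1, -1:] ^ N) c e"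
proof (cases "e < N")
  case True
  then show ?thesis by (simp add: wm0_om momq1_zero)
next
  case False
  have base: "int p ^ L p N dvd momq 1 N c 0" for N c
    by (cases "N = 0") (simp_all add: momq1_zero)
  have "int p ^ L p N dvd momq 1 N c e" by (rule momq_div[OF assms base])
  moreover have "int p ^ N dvd int p ^ e" using False by (simp add: le_imp_power_dvd)
  ultimately show ?thesis unfolding wm0_om by (simp add: power_add mult_dvd_mono)
qed

lemma of_nat_dvd_ring: "(m::nat) dvd n \<Longrightarrow> (of_nat m :: 'a::comm_ring_1) dvd of_nat n"
  by (metis dvd_def of_nat_mult)

lemma prime_2_or_odd: assumes "prime (p::nat)" shows "p = 2 \<or> odd p"
proof (rule disjCI)
  assume "\<not> odd p"
  then have "2 dvd p" by simp
  then show "p = 2" using primes_dvd_imp_eq[OF two_is_prime_nat assms] by simp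
qed

lemma sum_atMost_split_ends:
  assumes "(p::nat) \<ge> 1"
  shows "(\<Sum>k\<le>p. f k) = f 0 + f p + (\<Sum>k\<in>{1..<p}. (f k :: 'a::comm_monoid_add))"
proof -
  have "{..p} = insert 0 (insert p {1..<p})" using assms by auto
  then show ?thesis using assms by (simp add: add.assoc)
qed

lemma frob:
  fixes a b :: "'a::comm_ring_1"
  assumes "prime p"
  shows "of_nat p dvd ((a + b) ^ p - a ^ p - b ^ p)"
proof -
  have p1: "p \<ge> 1" using prime_gt_1_nat[OF assms] by simp
  have "(a + b) ^ p = (\<Sum>k\<le>p. of_nat (p choose k) * a ^ k * b ^ (p - k))" by (rule binomial_ring)
  also have "\<dots> = b ^ p + a ^ p + (\<Sum>k\<in>{1..<p}. of_nat (p choose k) * a ^ k * b ^ (p - k))"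
    by (subst sum_atMost_split_ends[OF p1]) simp
  finally have e: "(a + b) ^ p - a ^ p - b ^ p = (\<Sum>k\<in>{1..<p}. of_nat (p choose k) * a ^ k * b ^ (p - k))"
    by (simp add: algebra_simps)
  have "of_nat p dvd of_nat (p choose k) * a ^ k * b ^ (p - k)" if "k \<in> {1..<p}" for k
  proof -
    have "p dvd (p choose k)" using that assms by (intro dvd_choose_prime) auto
    then have "(of_nat p :: 'a) dvd of_nat (p choose k)" by (rule of_nat_dvd_ring)
    then show ?thesis by (simp add: mult.assoc)
  qed
  then show ?thesis unfolding e by (rule dvd_sum)
qed

lemma pow_congr:
  fixes x y :: "'a::comm_ring_1"
  assumes "prime p" "j \<ge> 1" "of_nat p ^ j dvd (x - y)"
  shows "of_nat p ^ Suc j dvd (x ^ p - y ^ p)"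
proof -
  have p1: "p \<ge> 2" using prime_gt_1_nat[OF assms(1)] by simp
  obtain u where u: "x - y = of_nat p ^ j * u" using assms(3) by (auto elim: dvdE)
  define t where "t = of_nat p ^ j * u"
  have x: "x = t + y" using u t_def by (simp add: algebra_simps)
  have "x ^ p = (\<Sum>k\<le>p. of_nat (p choose k) * t ^ k * y ^ (p - k))" unfolding x by (rule binomial_ring)
  also have "\<dots> = y ^ p + t ^ p + (\<Sum>k\<in>{1..<p}. of_nat (p choose k) * t ^ k * y ^ (p - k))"
    using p1 by (subst sum_atMost_split_ends) simp_all
  finally have e: "x ^ p - y ^ p = t ^ p + (\<Sum>k\<in>{1..<p}. of_nat (p choose k) * t ^ k * y ^ (p - k))"
    by (simp add: algebra_simps)
  have d1: "of_nat p ^ Suc j dvd t ^ p"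
  proof -
    have tp: "t ^ p = of_nat p ^ (j * p) * u ^ p" unfolding t_def by (simp add: power_mult_distrib power_mult)
    have "j * 2 \<le> j * p" using p1 by simp
    then have le: "Suc j \<le> j * p" using assms(2) by linarith
    have "of_nat p ^ Suc j dvd (of_nat p ^ (j * p) :: 'a)" by (rule le_imp_power_dvd[OF le])
    then have "of_nat p ^ Suc j dvd (of_nat p ^ (j * p) * u ^ p :: 'a)" by (rule dvd_mult2)
    then show ?thesis unfolding tp .
  qed
  have "of_nat p ^ Suc j dvd of_nat (p choose k) * t ^ k * y ^ (p - k)" if "k \<in> {1..<p}" for k
  proof -
    have "p dvd (p choose k)" using that assms by (intro dvd_choose_prime) auto
    then have a: "(of_nat p :: 'a) dvd of_nat (p choose k)" by (rule of_nat_dvd_ring)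
    have "k = Suc (k - 1)" using that by simp
    then have "t ^ k = t * t ^ (k - 1)" by (metis power_Suc)
    then have b: "of_nat p ^ j dvd t ^ k" unfolding t_def by simp
    have "of_nat p * of_nat p ^ j dvd of_nat (p choose k) * t ^ k" by (rule mult_dvd_mono[OF a b])
    then show ?thesis by (simp add: dvd_mult2)
  qed
  then have d2: "of_nat p ^ Suc j dvd (\<Sum>k\<in>{1..<p}. of_nat (p choose k) * t ^ k * y ^ (p - k))"
    by (rule dvd_sum)
  show ?thesis unfolding e by (rule dvd_add[OF d1 d2])
qed

lemma pcompose_power: "pcompose (Q ^ n) R = (pcompose Q R) ^ n"
  by (induction n) (simp_all add: pcompose_mult pcompose_1)

lemma F7:
  assumes "prime p"
  shows "(of_nat p ^ Suc k :: int poly) dvd ([:1, -1:] ^ (p ^ Suc k) - pcompose ([:1, -1:] ^ (p ^ k)) (monom 1 p))"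
proof (induction k)
  case 0
  let ?x = "[:0, 1:] :: int poly"
  have pc: "pcompose [:1, -1:] (monom 1 p) = 1 - ?x ^ p"
    by (simp add: pcompose_pCons monom_altdef)
  have om: "[:1, -1:] = (1 + (- ?x) :: int poly)" by (simp add: one_pCons)
  have f: "of_nat p dvd ((1 + (- ?x)) ^ p - 1 ^ p - (- ?x) ^ p)" by (rule frob[OF assms])
  have g: "(of_nat p :: int poly) dvd ((- ?x) ^ p + ?x ^ p)"
  proof (cases "p = 2")
    case True
    have h: "(- ?x) ^ 2 + ?x ^ 2 = (of_nat 2) * ?x ^ 2" by (simp only: power2_minus of_nat_numeral mult_2)
    show ?thesis unfolding True h by (rule dvd_triv_left)
  next
    case False
    then have "odd p" using prime_2_or_odd[OF assms] by simp
    then have "(- ?x) ^ p = - (?x ^ p)" by (rule power_minus_odd)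
    then have "(- ?x) ^ p + ?x ^ p = 0" by (simp only: add.left_inverse)
    then show ?thesis by (simp only: dvd_0_right)
  qed
  have "[:1, -1:] ^ p - pcompose [:1, -1:] (monom 1 p)
        = ((1 + (- ?x)) ^ p - 1 ^ p - (- ?x) ^ p) + ((- ?x) ^ p + ?x ^ p)"
    unfolding pc unfolding om by simp
  then show ?case using dvd_add[OF f g] by simp
next
  case (Suc k)
  have e1: "[:1, -1:] ^ (p ^ Suc (Suc k)) = ([:1, -1:] ^ (p ^ Suc k)) ^ p"
    by (simp add: power_mult[symmetric] mult.commute)
  have e2: "pcompose ([:1, -1:] ^ (p ^ Suc k)) (monom 1 p) = (pcompose ([:1, -1:] ^ (p ^ k)) (monom 1 p)) ^ p"
    by (simp add: pcompose_power[symmetric] power_mult[symmetric] mult.commute)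
  show ?case unfolding e1 e2 by (rule pow_congr[OF assms _ Suc]) simp
qed

lemma wm_Bpc:
  assumes "p > 1"
  shows "wm p (Suc (Suc a)) (B * pcompose A (monom 1 p)) c e =
    (\<Sum>d\<le>degree B. coeff B d * (if int p dvd (c - int d) then wm p (Suc a) A ((c - int d) div int p) e else 0))"
  by (simp add: wm_mult wm_pcomp[OF assms])

lemma term_gen:
  assumes "p > 1" and hA: "\<And>c2. int p ^ K dvd wm p (Suc a) A c2 e"
  shows "int p ^ K * t dvd wm p (Suc (Suc a)) (smult t B * pcompose A (monom 1 p)) c e"
proof -
  have "wm p (Suc (Suc a)) (smult t B * pcompose A (monom 1 p)) c e
      = t * wm p (Suc (Suc a)) (B * pcompose A (monom 1 p)) c e"
    by (simp add: wm_smult)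
  moreover have "int p ^ K dvd wm p (Suc (Suc a)) (B * pcompose A (monom 1 p)) c e"
    unfolding wm_Bpc[OF assms(1)] by (intro dvd_sum) (auto intro: dvd_mult hA)
  ultimately show ?thesis by (simp add: mult.commute mult_dvd_mono)
qed

lemma const_pow_poly: "(of_nat p ^ n :: int poly) * G = smult (int p ^ n) G"
proof -
  have "(of_nat p ^ n :: int poly) = [:int p ^ n:]"
    by (induction n) (simp_all add: of_nat_poly)
  then show ?thesis by simp
qed

lemma of_nat_mult_poly: "(of_nat k :: int poly) * G = smult (int k) G"
  by (simp add: of_nat_poly)

lemma pow_dvd_binom:
  assumes "prime p" "d \<le> N0"
  shows "int p ^ Tc p b (int d) (int N0) dvd int (N0 choose d)"
proof -
  have "Tc p b (int d) (int N0) \<le> multiplicity p (N0 choose d)"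
    unfolding Tc_nat by (rule kummer_lower[OF assms])
  then have "p ^ Tc p b (int d) (int N0) dvd p ^ multiplicity p (N0 choose d)" by (rule le_imp_power_dvd)
  also have "\<dots> dvd (N0 choose d)" by (rule multiplicity_dvd)
  finally show ?thesis by (metis int_dvd_int_iff of_nat_power)
qed

lemma term0:
  assumes pr: "prime p"
    and IH: "\<And>N c e. int p ^ (L p (N div p ^ a) + Tc p a c (int N)) dvd wm p (Suc a) ([:1, -1:] ^ N) c e"
    and N: "N = N0 + p ^ Suc a * N'"
  shows "int p ^ (L p N' + Tc p (Suc a) c (int N)) dvd
           wm p (Suc (Suc a)) ([:1, -1:] ^ N0 * pcompose ([:1, -1:] ^ (p ^ a * N')) (monom 1 p)) c e"
proof -
  have p1: "p > 1" using prime_gt_1_nat[OF pr] .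
  let ?M = "p ^ a * N'"
  show ?thesis unfolding wm_Bpc[OF p1] degree_om
  proof (intro dvd_sum)
    fix d assume d: "d \<in> {..N0}"
    show "int p ^ (L p N' + Tc p (Suc a) c (int N)) dvd
          coeff ([:1, -1:] ^ N0) d * (if int p dvd c - int d then wm p (Suc a) ([:1, -1:] ^ ?M) ((c - int d) div int p) e else 0)"
    proof (cases "int p dvd c - int d")
      case False then show ?thesis by simp
    next
      case True
      define c2 where "c2 = (c - int d) div int p"
      have hc: "c = int d + int p * c2" using True unfolding c2_def by simp
      have A: "int p ^ Tc p (Suc a) (int d) (int N0) dvd coeff ([:1, -1:] ^ N0) d"
        unfolding coeff_om using pow_dvd_binom[OF pr, of d N0] d by (simp add: dvd_mult)
      have Md: "?M div p ^ a = N'" using p1 by simp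
      have B: "int p ^ (L p N' + Tc p a c2 (int ?M)) dvd wm p (Suc a) ([:1, -1:] ^ ?M) c2 e"
        using IH[of ?M c2 e] unfolding Md .
      have C: "Tc p (Suc a) c (int N) \<le> Tc p (Suc a) (int d) (int N0) + Tc p a c2 (int ?M)"
      proof (rule carry_lemma[OF p1 _ hc])
        fix k assume k: "k \<in> {1..Suc a}"
        have "int p ^ k dvd int p ^ Suc a" using k by (intro le_imp_power_dvd) auto
        then have "int p ^ k dvd int (p ^ Suc a * N')" by (simp add: dvd_mult2)
        then show "int N mod int p ^ k = int N0 mod int p ^ k"
          unfolding N by (simp add: mod_add_right_eq[symmetric] del: of_nat_mult of_nat_power)
      next
        fix k assume k: "k \<in> {1..a}"
        have "int p ^ k dvd int p ^ a" using k by (intro le_imp_power_dvd) auto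
        then have "int p ^ k dvd int ?M" by (simp add: dvd_mult2)
        then show "int ?M mod int p ^ k = 0" by simp
      qed
      have "int p ^ (L p N' + Tc p (Suc a) c (int N)) dvd
            int p ^ (Tc p (Suc a) (int d) (int N0) + (L p N' + Tc p a c2 (int ?M)))"
        using C by (intro le_imp_power_dvd) simp
      also have "\<dots> dvd coeff ([:1, -1:] ^ N0) d * wm p (Suc a) ([:1, -1:] ^ ?M) c2 e"
        using mult_dvd_mono[OF A B] by (simp only: power_add[of "int p" "Tc p (Suc a) (int d) (int N0)"])
      finally show ?thesis using True unfolding c2_def by simp
    qed
  qed
qed

lemma expo_ineq:
  assumes pr: "prime p" and i: "1 \<le> i" "i \<le> N'" and T: "T \<le> Suc a"
  shows "L p N' + T \<le> L p (N' - i) + (multiplicity p (N' choose i) + Suc a * i)"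
proof -
  have b: "L p N' = multiplicity p (N' choose i) + L p i + L p (N' - i)" by (rule L_binom[OF pr i(2)])
  have li: "L p i \<le> i - 1" by (rule L_le[OF pr i(1)])
  have "Suc a * i = Suc a * (i - 1) + Suc a" using i(1) by (cases i) auto
  moreover have "i - 1 \<le> Suc a * (i - 1)" by simp
  ultimately have "L p i + Suc a \<le> Suc a * i" using li by linarith
  then show ?thesis using b T by linarith
qed

lemma main:
  assumes pr: "prime p"
  shows "int p ^ (L p (N div p ^ a) + Tc p a c (int N)) dvd wm p (Suc a) ([:1, -1:] ^ N) c e"
proof (induction a arbitrary: N c e)
  case 0
  have "Tc p 0 c (int N) = 0" by (simp add: Tc_def)
  then show ?case using base1[OF pr, of N c e] by simp
next
  case (Suc a)
  have p1: "p > 1" using prime_gt_1_nat[OF pr] .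
  define P where "P = p ^ Suc a"
  define N' where "N' = N div P"
  define N0 where "N0 = N mod P"
  have NN: "N = N0 + P * N'" by (simp add: N0_def N'_def)
  define X where "X = (monom 1 p :: int poly)"
  define Y where "Y = pcompose ([:1, -1:] ^ (p ^ a)) X"
  obtain G where G: "[:1, -1:] ^ P - Y = of_nat p ^ Suc a * G"
    using F7[OF pr, of a] unfolding P_def Y_def X_def by (auto elim: dvdE)
  define s where "s = int p ^ Suc a"
  have omP: "[:1, -1:] ^ P = smult s G + Y"
    using G unfolding const_pow_poly s_def by (simp add: algebra_simps)
  define trm where "trm i = [:1, -1:] ^ N0 * (of_nat (N' choose i) * (smult s G) ^ i * Y ^ (N' - i))" for i
  have "[:1, -1:] ^ N = [:1, -1:] ^ N0 * ([:1, -1:] ^ P) ^ N'"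
    by (simp add: NN power_add power_mult)
  also have "([:1, -1:] ^ P) ^ N' = (\<Sum>i\<le>N'. of_nat (N' choose i) * (smult s G) ^ i * Y ^ (N' - i))"
    unfolding omP by (rule binomial_ring)
  finally have eqN: "[:1, -1:] ^ N = (\<Sum>i\<le>N'. trm i)"
    by (simp add: sum_distrib_left trm_def)
  have Yp: "Y ^ k = pcompose ([:1, -1:] ^ (p ^ a * k)) X" for k
    by (simp add: Y_def pcompose_power power_mult)
  have trmeq: "trm i = smult (int (N' choose i) * s ^ i) ([:1, -1:] ^ N0 * G ^ i) * pcompose ([:1, -1:] ^ (p ^ a * (N' - i))) X" for i
    unfolding trm_def Yp by (simp add: of_nat_mult_poly smult_power algebra_simps)
  have Nd: "N div p ^ Suc a = N'" by (simp add: N'_def P_def)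
  show ?case unfolding Nd eqN wm_sum[OF finite_atMost]
  proof (intro dvd_sum)
    fix i assume i: "i \<in> {..N'}"
    show "int p ^ (L p N' + Tc p (Suc a) c (int N)) dvd wm p (Suc (Suc a)) (trm i) c e"
    proof (cases "i = 0")
      case True
      have "trm i = [:1, -1:] ^ N0 * pcompose ([:1, -1:] ^ (p ^ a * N')) (monom 1 p)"
        unfolding trmeq True X_def by simp
      moreover have "N = N0 + p ^ Suc a * N'" using NN P_def by simp
      ultimately show ?thesis using term0[OF pr Suc.IH] by simp
    next
      case False
      let ?A = "[:1, -1:] ^ (p ^ a * (N' - i)) :: int poly"
      have Md: "(p ^ a * (N' - i)) div p ^ a = N' - i" using p1 by simp
      have hA: "int p ^ L p (N' - i) dvd wm p (Suc a) ?A c2 e" for c2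
        using Suc.IH[of "p ^ a * (N' - i)" c2 e] unfolding Md by (simp add: power_add dvd_mult_left)
      have tg: "int p ^ L p (N' - i) * (int (N' choose i) * s ^ i) dvd wm p (Suc (Suc a)) (trm i) c e"
        unfolding trmeq X_def by (rule term_gen[OF p1 hA])
      have mC: "int p ^ multiplicity p (N' choose i) dvd int (N' choose i)"
        by (metis multiplicity_dvd of_nat_dvd_iff of_nat_power)
      have si: "s ^ i = int p ^ (Suc a * i)" unfolding s_def by (rule power_mult[symmetric])
      have ex: "L p N' + Tc p (Suc a) c (int N) \<le> L p (N' - i) + (multiplicity p (N' choose i) + Suc a * i)"
        using expo_ineq[OF pr _ _ Tc_le] False i by simp
      have "int p ^ (L p N' + Tc p (Suc a) c (int N)) dvd int p ^ (L p (N' - i) + (multiplicity p (N' choose i) + Suc a * i))"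
        by (rule le_imp_power_dvd[OF ex])
      also have "\<dots> dvd int p ^ L p (N' - i) * (int (N' choose i) * s ^ i)"
        unfolding power_add si by (intro mult_dvd_mono mC dvd_refl)
      also note tg
      finally show ?thesis .
    qed
  qed
qed

lemma bern_sum: "(\<Sum>k<u. of_nat (u choose k) * bernoulli k) = (if u = 1 then 1 else 0)"
proof (cases "u \<le> 1")
  case True
  then consider "u = 0" | "u = 1" by linarith
  then show ?thesis by cases (auto simp: bernoulli.simps)
next
  case False
  then obtain n where u: "u = Suc n" and n: "n \<ge> 1" by (cases u) auto
  have b: "bernoulli n = - (\<Sum>k<n. of_nat ((n + 1) choose k) * bernoulli k) / of_nat (n + 1)"
    using n by (subst bernoulli.simps) simp
  have "(\<Sum>k<u. of_nat (u choose k) * bernoulli k)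
        = (\<Sum>k<n. of_nat ((n+1) choose k) * bernoulli k) + of_nat (n+1) * bernoulli n"
    by (simp add: u)
  also have "\<dots> = 0" unfolding b by (simp add: field_simps)
  finally show ?thesis using False by simp
qed

lemma bernpoly_diff:
  assumes "m \<ge> 1"
  shows "bernpoly m (x + 1) - bernpoly m x = of_nat m * x ^ (m - 1)"
proof -
  define f where "f k i = of_nat (m choose k) * bernoulli k * (of_nat ((m - k) choose i) * x ^ (m - (k + i)))" for k i
  have "bernpoly m (x + 1) = (\<Sum>k\<le>m. \<Sum>i\<le>m-k. f k i)"
    unfolding bernpoly_def f_def
    apply (rule sum.cong[OF refl])
    apply (subst add.commute, subst binomial_ring)
    apply (simp add: sum_distrib_left)
    done
  also have "\<dots> = (\<Sum>(k,i)\<in>{(k,i). k + i \<le> m}. f k i)"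
    apply (subst sum.Sigma) apply simp apply simp
    apply (rule sum.cong) apply auto done
  also have "\<dots> = (\<Sum>u\<le>m. \<Sum>k\<le>u. f k (u - k))"
    by (rule sum.triangle_reindex_eq)
  also have "\<dots> = (\<Sum>u\<le>m. of_nat (m choose u) * x ^ (m - u) * (\<Sum>k\<le>u. of_nat (u choose k) * bernoulli k))"
  proof (rule sum.cong[OF refl])
    fix u assume u: "u \<in> {..m}"
    show "(\<Sum>k\<le>u. f k (u - k)) = of_nat (m choose u) * x ^ (m - u) * (\<Sum>k\<le>u. of_nat (u choose k) * bernoulli k)"
      unfolding sum_distrib_left
    proof (rule sum.cong[OF refl])
      fix k assume k: "k \<in> {..u}"
      have "(m choose u) * (u choose k) = (m choose k) * ((m - k) choose (u - k))"
        using u k by (intro choose_mult) auto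
      hence e: "(of_nat (m choose k) * of_nat ((m - k) choose (u - k)) :: rat) = of_nat (m choose u) * of_nat (u choose k)"
        by (metis of_nat_mult)
      have "f k (u - k) = (of_nat (m choose k) * of_nat ((m - k) choose (u - k))) * bernoulli k * x ^ (m - u)"
        unfolding f_def using k u by simp
      also have "\<dots> = of_nat (m choose u) * x ^ (m - u) * (of_nat (u choose k) * bernoulli k)"
        unfolding e by simp
      finally show "f k (u - k) = of_nat (m choose u) * x ^ (m - u) * (of_nat (u choose k) * bernoulli k)" .
    qed
  qed
  also have "\<dots> = (\<Sum>u\<le>m. of_nat (m choose u) * x ^ (m - u) * bernoulli u
                   + (if u = 1 then of_nat m * x ^ (m - 1) else 0))"
  proof (rule sum.cong[OF refl])
    fix u
    have "(\<Sum>k\<le>u. of_nat (u choose k) * bernoulli k) = (\<Sum>k<u. of_nat (u choose k) * bernoulli k) + bernoulli u"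
      by (simp add: lessThan_Suc_atMost[symmetric])
    then show "of_nat (m choose u) * x ^ (m - u) * (\<Sum>k\<le>u. of_nat (u choose k) * bernoulli k) =
         of_nat (m choose u) * x ^ (m - u) * bernoulli u + (if u = 1 then of_nat m * x ^ (m - 1) else 0)"
    proof -
      assume h: "(\<Sum>k\<le>u. of_nat (u choose k) * bernoulli k) = (\<Sum>k<u. of_nat (u choose k) * bernoulli k) + bernoulli u"
      show ?thesis unfolding h bern_sum[of u] by (cases "u = 1") (simp_all add: algebra_simps)
    qed
  qed
  also have "\<dots> = bernpoly m x + of_nat m * x ^ (m - 1)"
    unfolding sum.distrib bernpoly_def using assms by (simp add: mult.commute mult.left_commute)
  finally show ?thesis by simp
qed

lemma abel:
  fixes g :: "nat \<Rightarrow> 'a::comm_ring_1"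
  shows "(\<Sum>k\<le>Suc N. of_nat (Suc N choose k) * (-1) ^ k * g k)
       = - (\<Sum>j\<le>N. (-1) ^ j * of_nat (N choose j) * (g (Suc j) - g j))"
proof -
  define h where "h k = (-1) ^ k * of_nat (N choose k) * g k" for k
  define A where "A = (\<Sum>j\<le>N. h j)"
  define B where "B = (\<Sum>j\<le>N. (-1) ^ j * of_nat (N choose j) * g (Suc j))"
  have hS: "(\<Sum>j\<le>N. h (Suc j)) = A - g 0"
  proof -
    have hSN: "h (Suc N) = 0" by (simp add: h_def binomial_eq_0)
    have e1: "(\<Sum>k\<le>Suc N. h k) = A" by (simp add: A_def hSN)
    have e2: "(\<Sum>k\<le>Suc N. h k) = h 0 + (\<Sum>j\<le>N. h (Suc j))" by (rule sum.atMost_Suc_shift)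
    have e3: "h 0 = g 0" by (simp add: h_def)
    show ?thesis using e1 e2 e3 by (simp add: eq_diff_eq add.commute)
  qed
  have "(\<Sum>k\<le>Suc N. of_nat (Suc N choose k) * (-1) ^ k * g k)
       = g 0 + (\<Sum>j\<le>N. of_nat (Suc N choose Suc j) * (-1) ^ Suc j * g (Suc j))"
    by (subst sum.atMost_Suc_shift) simp
  also have "(\<Sum>j\<le>N. of_nat (Suc N choose Suc j) * (-1) ^ Suc j * g (Suc j)) = h' - B"
    if "h' = (\<Sum>j\<le>N. h (Suc j))" for h'
    unfolding that B_def h_def sum_subtractf[symmetric]
    by (intro sum.cong refl) (simp add: algebra_simps)
  finally have "(\<Sum>k\<le>Suc N. of_nat (Suc N choose k) * (-1) ^ k * g k) = A - B"
    using hS by simp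
  moreover have "(\<Sum>j\<le>N. (-1) ^ j * of_nat (N choose j) * (g (Suc j) - g j)) = B - A"
    unfolding A_def B_def h_def sum_subtractf[symmetric] by (intro sum.cong refl) (simp add: algebra_simps)
  ultimately show ?thesis by simp
qed

lemma div_step:
  fixes x q :: int
  assumes "q > 0"
  shows "x div q = (x - 1) div q + (if q dvd x then 1 else 0)"
proof -
  define a r where "a = (x - 1) div q" "r = (x - 1) mod q"
  have x: "x = (r + 1) + a * q" unfolding a_r_def by (simp add: algebra_simps)
  have r: "0 \<le> r" "r < q" unfolding a_r_def using assms by simp_all
  show ?thesis
  proof (cases "r + 1 = q")
    case True
    then have "x = 0 + (a + 1) * q" using x by (simp add: algebra_simps)
    then have "x div q = a + 1" "q dvd x" using assms by simp_all
    then show ?thesis unfolding a_r_def[symmetric] by simp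
  next
    case False
    then have r1: "r + 1 < q" using r by linarith
    have r0: "(r + 1) div q = 0" "(r + 1) mod q = r + 1" using r r1 by simp_all
    have "x div q = a" unfolding x using assms r0 by (simp only: div_mult_self1)
    moreover have "x mod q = r + 1" unfolding x using assms r0 by (simp only: mod_mult_self1)
    then have "\<not> q dvd x" using r by (simp add: dvd_eq_mod_eq_0)
    ultimately show ?thesis unfolding a_r_def[symmetric] by simp
  qed
qed

lemma bern_step:
  fixes q r :: int
  assumes "q > 0" "m \<ge> 1"
  shows "bernpoly m (of_int ((int (Suc j) - r) div q)) - bernpoly m (of_int ((int j - r) div q))
       = (if q dvd (int j - (r - 1)) then of_nat m * (of_int ((int j - (r - 1)) div q - 1)) ^ (m - 1) else 0)"
proof -
  define x where "x = int j - (r - 1)"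
  have e1: "int (Suc j) - r = x" by (simp add: x_def)
  have e2: "int j - r = x - 1" by (simp add: x_def)
  have d: "x div q = (x - 1) div q + (if q dvd x then 1 else 0)" by (rule div_step[OF assms(1)])
  show ?thesis
  proof (cases "q dvd x")
    case True
    define a where "a = (x - 1) div q"
    have xa: "x div q = a + 1" using d True by (simp add: a_def)
    have "bernpoly m (of_int a + 1) - bernpoly m (of_int a) = of_nat m * (of_int a) ^ (m - 1)"
      by (rule bernpoly_diff[OF assms(2)])
    then show ?thesis unfolding e1 e2 x_def[symmetric] a_def[symmetric] xa using True by simp
  next
    case False
    then show ?thesis unfolding e1 e2 x_def[symmetric] using d by simp
  qed
qed

lemma padic_ge:
  assumes "prime p" "int p ^ B dvd Z"
  shows "padic_ord p (of_int Z) \<ge> ereal (real B)"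
proof (cases "Z = 0")
  case True
  then show ?thesis by (simp add: padic_ord_def)
next
  case False
  have nu: "\<not> is_unit (int p)" using prime_gt_1_nat[OF assms(1)] by simp
  have "B \<le> multiplicity (int p) Z" using power_dvd_iff_le_multiplicity[OF False nu] assms(2) by simp
  then show ?thesis using False by (simp add: padic_ord_def quotient_of_rat_of_int)
qed

lemma Zj_wm:
  fixes p \<alpha> N m :: nat and s :: int
  shows "(\<Sum>j\<le>N. if int p ^ \<alpha> dvd (int j - s) then (-1) ^ j * int (N choose j) * (int p * ((int j - s) div int p ^ \<alpha>) - int p) ^ (m - 1) else 0)
       = (\<Sum>i\<le>m - 1. int ((m - 1) choose i) * (- int p) ^ (m - 1 - i) * wm p \<alpha> ([:1, -1:] ^ N) s i)"
proof -
  define b where "b j = (int p ^ \<alpha> dvd (int j - s))" for j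
  define y where "y j = int p * ((int j - s) div int p ^ \<alpha>)" for j
  have wmx: "wm p \<alpha> ([:1, -1:] ^ N) s i = (\<Sum>j\<le>N. (-1) ^ j * int (N choose j) * (if b j then y j ^ i else 0))" for i
    unfolding wm_def degree_om coeff_om wt_def b_def y_def by simp
  have "(\<Sum>j\<le>N. if b j then (-1) ^ j * int (N choose j) * (y j - int p) ^ (m - 1) else 0)
      = (\<Sum>j\<le>N. \<Sum>i\<le>m - 1. int ((m - 1) choose i) * (- int p) ^ (m - 1 - i) * ((-1) ^ j * int (N choose j) * (if b j then y j ^ i else 0)))"
  proof (intro sum.cong refl)
    fix j
    have "(y j - int p) ^ (m - 1) = (\<Sum>i\<le>m - 1. of_nat ((m - 1) choose i) * y j ^ i * (- int p) ^ (m - 1 - i))"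
      using binomial_ring[of "y j" "- int p" "m - 1"] by simp
    then show "(if b j then (-1) ^ j * int (N choose j) * (y j - int p) ^ (m - 1) else 0)
      = (\<Sum>i\<le>m - 1. int ((m - 1) choose i) * (- int p) ^ (m - 1 - i) * ((-1) ^ j * int (N choose j) * (if b j then y j ^ i else 0)))"
      by (cases "b j") (simp_all add: sum_distrib_left algebra_simps)
  qed
  also have "\<dots> = (\<Sum>i\<le>m - 1. int ((m - 1) choose i) * (- int p) ^ (m - 1 - i) * wm p \<alpha> ([:1, -1:] ^ N) s i)"
    unfolding wmx sum_distrib_left by (rule sum.swap)
  finally show ?thesis unfolding b_def y_def .
qed

lemma sum_to_Z:
  fixes p \<alpha> m n :: nat and r :: int
  assumes p0: "p > 0" and m: "m \<ge> 1" and n: "n \<ge> 1"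
  shows "of_nat p ^ (m - 1) / of_nat m *
           (\<Sum>k\<le>n. of_nat (n choose k) * (-1) ^ k *
              bernpoly m (of_int \<lfloor>of_int (int k - r) / (of_nat p ^ \<alpha> :: rat)\<rfloor>))
       = of_int (- (\<Sum>i\<le>m - 1. int ((m - 1) choose i) * (- int p) ^ (m - 1 - i) * wm p \<alpha> ([:1, -1:] ^ (n - 1)) (r - 1) i))"
proof -
  define q where "q = int p ^ \<alpha>"
  have q0: "q > 0" using p0 by (simp add: q_def)
  define N where "N = n - 1"
  have nN: "n = Suc N" using n by (simp add: N_def)
  define s where "s = r - 1"
  define g where "g k = bernpoly m (of_int ((int k - r) div q))" for k
  have fl: "\<lfloor>of_int (int k - r) / (of_nat p ^ \<alpha> :: rat)\<rfloor> = (int k - r) div q" for k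
  proof -
    have "(of_nat p ^ \<alpha> :: rat) = of_int q" by (simp add: q_def)
    then show ?thesis by (simp only: floor_divide_of_int_eq)
  qed
  define y where "y j = (int j - s) div q - 1" for j
  have "(\<Sum>k\<le>n. of_nat (n choose k) * (-1) ^ k * bernpoly m (of_int \<lfloor>of_int (int k - r) / (of_nat p ^ \<alpha> :: rat)\<rfloor>))
      = (\<Sum>k\<le>Suc N. of_nat (Suc N choose k) * (-1) ^ k * g k)"
    by (simp only: fl g_def nN)
  also have "\<dots> = - (\<Sum>j\<le>N. (-1) ^ j * of_nat (N choose j) * (g (Suc j) - g j))" by (rule abel)
  also have "\<dots> = - (\<Sum>j\<le>N. (-1) ^ j * of_nat (N choose j) * (if q dvd (int j - s) then of_nat m * (of_int (y j)) ^ (m - 1) else 0))"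
    unfolding g_def s_def y_def using bern_step[OF q0 m] by simp
  finally have S: "(\<Sum>k\<le>n. of_nat (n choose k) * (-1) ^ k * bernpoly m (of_int \<lfloor>of_int (int k - r) / (of_nat p ^ \<alpha> :: rat)\<rfloor>))
      = - (\<Sum>j\<le>N. (-1) ^ j * of_nat (N choose j) * (if q dvd (int j - s) then of_nat m * (of_int (y j)) ^ (m - 1) else 0))" .
  have mz: "(of_nat m :: rat) \<noteq> 0" using m by simp
  have T: "of_nat p ^ (m - 1) / of_nat m * ((-1) ^ j * of_nat (N choose j) * (if q dvd (int j - s) then of_nat m * (of_int (y j)) ^ (m - 1) else 0))
     = (of_int (if q dvd (int j - s) then (-1) ^ j * int (N choose j) * (int p * ((int j - s) div q) - int p) ^ (m - 1) else 0) :: rat)" for j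
  proof (cases "q dvd (int j - s)")
    case True
    have "int p * ((int j - s) div q) - int p = int p * y j" by (simp add: y_def algebra_simps)
    then have "(int p * ((int j - s) div q) - int p) ^ (m - 1) = int p ^ (m - 1) * y j ^ (m - 1)"
      by (simp add: power_mult_distrib)
    then show ?thesis using True mz by (simp add: field_simps)
  qed simp
  have "of_nat p ^ (m - 1) / of_nat m * (\<Sum>k\<le>n. of_nat (n choose k) * (-1) ^ k * bernpoly m (of_int \<lfloor>of_int (int k - r) / (of_nat p ^ \<alpha> :: rat)\<rfloor>))
      = of_int (- (\<Sum>j\<le>N. if q dvd (int j - s) then (-1) ^ j * int (N choose j) * (int p * ((int j - s) div q) - int p) ^ (m - 1) else 0))"
    unfolding S mult_minus_right sum_distrib_left T by simp
  also have "\<dots> = of_int (- (\<Sum>i\<le>m - 1. int ((m - 1) choose i) * (- int p) ^ (m - 1 - i) * wm p \<alpha> ([:1, -1:] ^ N) s i))"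
    unfolding q_def Zj_wm ..
  finally show ?thesis by (simp add: N_def s_def)
qed

lemma shift_sum: fixes N :: nat shows "(\<Sum>j\<le>N. h (Suc j)) = (\<Sum>k\<in>{1..Suc N}. (h k :: nat))"
proof -
  have "(\<Sum>k\<in>{0 + 1..N + 1}. h k) = (\<Sum>j = 0..N. h (j + 1))" by (rule sum.shift_bounds_cl_nat_ivl)
  then show ?thesis by (simp add: atLeast0AtMost)
qed

lemma suminf_fin:
  fixes p N \<alpha> :: nat
  assumes "p > 1"
  shows "(\<Sum>j. real (N div p ^ (j + \<alpha>))) = real (\<Sum>j\<le>N. N div p ^ (j + \<alpha>))"
proof -
  have "(\<lambda>j. real (N div p ^ (j + \<alpha>))) sums (\<Sum>j\<le>N. real (N div p ^ (j + \<alpha>)))"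
  proof (rule sums_finite)
    fix j assume "j \<notin> {..N}"
    then have "N < j" by simp
    also have "j < p ^ j" by (rule pow_gt[OF assms])
    also have "p ^ j \<le> p ^ (j + \<alpha>)" using assms by (intro power_increasing) auto
    finally show "real (N div p ^ (j + \<alpha>)) = 0" by simp
  qed simp
  then show ?thesis by (simp add: sums_unique[symmetric])
qed

lemma suminf_L:
  fixes p N \<alpha> :: nat
  assumes pr: "prime p" and a: "\<alpha> \<ge> 1"
  shows "(\<Sum>j. real (N div p ^ (j + \<alpha>))) = real (L p (N div p ^ (\<alpha> - 1)))"
proof -
  have p1: "p > 1" using prime_gt_1_nat[OF pr] .
  define M where "M = N div p ^ (\<alpha> - 1)"
  have "(\<Sum>j\<le>N. N div p ^ (j + \<alpha>)) = (\<Sum>j\<le>N. M div p ^ (Suc j))"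
  proof (intro sum.cong refl)
    fix j
    have ee: "j + \<alpha> = (\<alpha> - 1) + Suc j" using a by simp
    have "p ^ (j + \<alpha>) = p ^ (\<alpha> - 1) * p ^ (Suc j)" unfolding ee by (rule power_add)
    then show "N div p ^ (j + \<alpha>) = M div p ^ (Suc j)" by (simp add: M_def div_mult2_eq)
  qed
  also have "\<dots> = (\<Sum>k\<in>{1..Suc N}. M div p ^ k)" by (rule shift_sum)
  also have "\<dots> = leg p M" using leg_ext[OF p1, of M "Suc N"] by (simp add: M_def div_le_dividend le_SucI)
  also have "\<dots> = L p M" using L_eq_leg[OF pr] by simp
  finally have h: "(\<Sum>j\<le>N. N div p ^ (j + \<alpha>)) = L p M" .
  show ?thesis by (simp only: suminf_fin[OF p1] h M_def)
qed

lemma suminf_L0: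
  fixes p N :: nat
  assumes pr: "prime p"
  shows "(\<Sum>j. real (N div p ^ (j + 0))) = real (N + L p N)"
proof -
  have p1: "p > 1" using prime_gt_1_nat[OF pr] .
  have "(\<Sum>j\<le>Suc N. N div p ^ j) = N div p ^ 0 + (\<Sum>j\<le>N. N div p ^ (Suc j))"
    by (rule sum.atMost_Suc_shift)
  also have "(\<Sum>j\<le>N. N div p ^ (Suc j)) = (\<Sum>k\<in>{1..Suc N}. N div p ^ k)" by (rule shift_sum)
  also have "\<dots> = leg p N" using leg_ext[OF p1, of N "Suc N"] by simp
  finally have e: "(\<Sum>j\<le>Suc N. N div p ^ j) = N + L p N" using L_eq_leg[OF pr] by simp
  have "(\<Sum>j\<le>Suc N. N div p ^ j) = (\<Sum>j\<le>N. N div p ^ j)"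
  proof -
    have "N < p ^ (Suc N)" using pow_gt[OF p1, of "Suc N"] by simp
    then show ?thesis by simp
  qed
  then have h0: "(\<Sum>j\<le>N. N div p ^ (j + 0)) = N + L p N" using e by simp
  show ?thesis by (simp only: suminf_fin[OF p1] h0)
qed

lemma lres_pos:
  fixes p \<alpha> :: nat and a :: int
  assumes "p > 0" "\<alpha> \<ge> 1"
  shows "nat \<lfloor>lres a (real p powr (real \<alpha> - 1))\<rfloor> = nat (a mod int (p ^ (\<alpha> - 1)))"
proof -
  define P where "P = p ^ (\<alpha> - 1)"
  have e: "real p powr (real \<alpha> - 1) = real_of_int (int P)"
  proof -
    have "real \<alpha> - 1 = real (\<alpha> - 1)" using assms(2) by (simp add: of_nat_diff)
    then have "real p powr (real \<alpha> - 1) = real p powr (real (\<alpha> - 1))" by (simp only:)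
    also have "\<dots> = real p ^ (\<alpha> - 1)" using assms(1) by (intro powr_realpow) simp
    finally show ?thesis by (simp add: P_def)
  qed
  have "lres a (real p powr (real \<alpha> - 1)) = of_int a - of_int (int P) * of_int (a div int P)"
    unfolding lres_def e floor_divide_of_int_eq ..
  also have "\<dots> = of_int (a mod int P)"
    by (simp only: minus_mult_div_eq_mod[symmetric] of_int_diff of_int_mult)
  finally show ?thesis by (simp add: P_def)
qed

lemma lres_zero:
  fixes p :: nat and a :: int
  assumes "p > 0"
  shows "nat \<lfloor>lres a (real p powr (real 0 - 1))\<rfloor> = 0"
proof -
  have pz: "real p \<noteq> 0" using assms by simp
  have e: "real p powr (real 0 - 1) = 1 / real p" using assms by (simp add: powr_minus divide_inverse)
  have f: "of_int a / (1 / real p) = real_of_int (a * int p)" by simp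
  have g: "1 / real p * real_of_int (a * int p) = of_int a" using pz by simp
  have "lres a (real p powr (real 0 - 1)) = 0" unfolding lres_def e f floor_of_int g by simp
  then show ?thesis by simp
qed

lemma carries_zero: assumes "(p::nat) > 0" shows "carries p 0 0 = 0"
proof -
  have "{i. 0 mod p ^ (i + 1) + 0 mod p ^ (i + 1) \<ge> p ^ (i + 1)} = {}" using assms by simp
  then show ?thesis unfolding carries_def by (simp only: card.empty)
qed

lemma carry_iff:
  fixes u N Q :: int
  assumes "Q > 0"
  shows "(u mod Q + (N - u) mod Q \<ge> Q) \<longleftrightarrow> (u mod Q > N mod Q)"
proof -
  define A B where "A = u mod Q" "B = N mod Q"
  have AB: "0 \<le> A" "A < Q" "0 \<le> B" "B < Q" using assms by (simp_all add: A_B_def)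
  have e: "(N - u) mod Q = (B - A) mod Q" by (simp add: A_B_def mod_diff_eq)
  show ?thesis
  proof (cases "A \<le> B")
    case True
    then have "(B - A) mod Q = B - A" using AB by simp
    then show ?thesis using True AB unfolding e A_B_def[symmetric] by simp
  next
    case False
    have "(B - A) mod Q = (B - A + Q) mod Q" by simp
    also have "\<dots> = B - A + Q" using False AB by (intro mod_pos_pos_trivial) auto
    finally show ?thesis using False AB unfolding e A_B_def[symmetric] by simp
  qed
qed

lemma carries_Tc:
  fixes p a :: nat and s N :: int
  assumes p1: "p > 1"
  shows "carries p (nat (s mod int (p ^ a))) (nat ((N - s) mod int (p ^ a))) = Tc p a s N"
proof -
  define P where "P = p ^ a"
  define x where "x = nat (s mod int P)"
  define y where "y = nat ((N - s) mod int P)"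
  have P0: "P > 0" using p1 by (simp add: P_def)
  have ix: "int x = s mod int P" and iy: "int y = (N - s) mod int P" using P0 by (simp_all add: x_def y_def)
  have xP: "x < P" and yP: "y < P" using P0 ix iy by (simp_all add: x_def y_def nat_less_iff)
  have key: "(x mod p ^ (i + 1) + y mod p ^ (i + 1) \<ge> p ^ (i + 1)) \<longleftrightarrow>
             (Suc i \<le> a \<and> s mod int p ^ Suc i > N mod int p ^ Suc i)" for i
  proof (cases "Suc i \<le> a")
    case True
    define Q where "Q = p ^ Suc i"
    have Q0: "Q > 0" using p1 by (simp add: Q_def)
    have "Q dvd P" unfolding Q_def P_def using True by (rule le_imp_power_dvd)
    then have QP: "int Q dvd int P" by simp
    have "int (x mod Q) = s mod int Q" using QP by (simp add: zmod_int ix mod_mod_cancel)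
    moreover have "int (y mod Q) = (N - s) mod int Q" using QP by (simp add: zmod_int iy mod_mod_cancel)
    ultimately have "(x mod Q + y mod Q \<ge> Q) \<longleftrightarrow> (s mod int Q + (N - s) mod int Q \<ge> int Q)" by linarith
    also have "\<dots> \<longleftrightarrow> (s mod int Q > N mod int Q)" by (rule carry_iff) (use Q0 in simp)
    finally show ?thesis using True by (simp add: Q_def)
  next
    case False
    have "Suc a \<le> i + 1" using False by simp
    then have "p ^ Suc a \<le> p ^ (i + 1)" using p1 by (intro power_increasing) auto
    then have "p * P \<le> p ^ (i + 1)" unfolding P_def by simp
    moreover have "2 * P \<le> p * P" using p1 by simp
    moreover have "x + y < 2 * P" using xP yP by simp
    ultimately have "x + y < p ^ (i + 1)" by linarith
    then have "x mod p ^ (i + 1) = x" "y mod p ^ (i + 1) = y" by simp_all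
    then show ?thesis using False \<open>x + y < p ^ (i + 1)\<close> by simp
  qed
  define T where "T = {k\<in>{1..a}. s mod int p ^ k > N mod int p ^ k}"
  have setq: "{i. x mod p ^ (i + 1) + y mod p ^ (i + 1) \<ge> p ^ (i + 1)} = (\<lambda>k. k - 1) ` T"
  proof (intro equalityI subsetI)
    fix i assume "i \<in> {i. x mod p ^ (i + 1) + y mod p ^ (i + 1) \<ge> p ^ (i + 1)}"
    then have "Suc i \<le> a \<and> s mod int p ^ Suc i > N mod int p ^ Suc i" using key[of i] by simp
    then have "Suc i \<in> T" by (simp add: T_def)
    then show "i \<in> (\<lambda>k. k - 1) ` T" by (rule rev_image_eqI) simp
  next
    fix i assume "i \<in> (\<lambda>k. k - 1) ` T"
    then obtain k where k: "k \<in> T" "i = k - 1" by auto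
    then have k1: "k \<in> {1..a}" "s mod int p ^ k > N mod int p ^ k" by (simp_all add: T_def)
    then have ki: "k = Suc i" using k(2) by simp
    have "Suc i \<le> a \<and> s mod int p ^ Suc i > N mod int p ^ Suc i" using k1 unfolding ki by simp
    then show "i \<in> {i. x mod p ^ (i + 1) + y mod p ^ (i + 1) \<ge> p ^ (i + 1)}" using key[of i] by simp
  qed
  have inj: "inj_on (\<lambda>k. k - 1) T" by (auto simp: inj_on_def T_def)
  have "carries p x y = card ((\<lambda>k. k - 1) ` T)" unfolding carries_def setq ..
  also have "\<dots> = card T" by (rule card_image[OF inj])
  also have "\<dots> = Tc p a s N" by (simp add: T_def Tc_def)
  finally show ?thesis by (simp add: x_def y_def P_def)
qed

theorem corollary1p1:
  fixes p \<alpha> m n :: nat and r :: int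
  assumes "prime p" and "m > 0" and "n > 0"
  shows "padic_ord p
           (of_nat p ^ (m - 1) / of_nat m *
             (\<Sum>k\<le>n. of_nat (n choose k) * (-1) ^ k *
                bernpoly m (of_int \<lfloor>of_int (int k - r) / (of_nat p ^ \<alpha> :: rat)\<rfloor>)))
         \<ge> ereal ((\<Sum>j. real ((n - 1) div p ^ (j + \<alpha>)))
              + real (carries p (nat \<lfloor>lres (r - 1) (real p powr (real \<alpha> - 1))\<rfloor>)
                                  (nat \<lfloor>lres (int n - r) (real p powr (real \<alpha> - 1))\<rfloor>)))"
proof -
  have pr: "prime p" by (rule assms(1))
  have p1: "p > 1" using prime_gt_1_nat[OF pr] .
  have p0: "p > 0" using p1 by simp
  have m1: "m \<ge> 1" using assms(2) by simp
  have n1: "n \<ge> 1" using assms(3) by simp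
  define N where "N = n - 1"
  define W where "W i = wm p \<alpha> ([:1, -1:] ^ N) (r - 1) i" for i
  define Z where "Z = - (\<Sum>i\<le>m - 1. int ((m - 1) choose i) * (- int p) ^ (m - 1 - i) * W i)"
  have eq: "of_nat p ^ (m - 1) / of_nat m *
             (\<Sum>k\<le>n. of_nat (n choose k) * (-1) ^ k *
                bernpoly m (of_int \<lfloor>of_int (int k - r) / (of_nat p ^ \<alpha> :: rat)\<rfloor>)) = of_int Z"
    unfolding Z_def W_def N_def by (rule sum_to_Z[OF p0 m1 n1])
  have nr: "int n - r = int N - (r - 1)" using n1 by (simp add: N_def)
  have Zdvd: "int p ^ B dvd Z" if h: "\<And>i. int p ^ B dvd W i" for B
    unfolding Z_def by (intro dvd_minus_iff[THEN iffD2] dvd_sum dvd_mult h)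
  show ?thesis
  proof (cases "\<alpha> = 0")
    case True
    have lz: "nat \<lfloor>lres x (real p powr (real \<alpha> - 1))\<rfloor> = 0" for x
      using lres_zero[OF p0, of x] True by simp
    have s: "(\<Sum>j. real ((n - 1) div p ^ (j + \<alpha>))) = real (N + L p N)"
      using suminf_L0[OF pr, of N] True by (simp add: N_def)
    have "int p ^ (N + L p N) dvd W i" for i
      unfolding W_def True by (rule base0[OF pr])
    then have "padic_ord p (of_int Z) \<ge> ereal (real (N + L p N))"
      by (intro padic_ge[OF pr] Zdvd)
    then show ?thesis unfolding eq s lz carries_zero[OF p0] by simp
  next
    case False
    then obtain a where a: "\<alpha> = Suc a" by (cases \<alpha>) auto
    have lp: "nat \<lfloor>lres x (real p powr (real \<alpha> - 1))\<rfloor> = nat (x mod int (p ^ a))" for x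
      using lres_pos[OF p0, of \<alpha> x] a by simp
    have s: "(\<Sum>j. real ((n - 1) div p ^ (j + \<alpha>))) = real (L p (N div p ^ a))"
      using suminf_L[OF pr, of \<alpha> N] a by (simp add: N_def)
    have c: "carries p (nat ((r - 1) mod int (p ^ a))) (nat ((int N - (r - 1)) mod int (p ^ a)))
           = Tc p a (r - 1) (int N)"
      by (rule carries_Tc[OF p1])
    have "int p ^ (L p (N div p ^ a) + Tc p a (r - 1) (int N)) dvd W i" for i
      unfolding W_def a by (rule main[OF pr])
    then have "padic_ord p (of_int Z) \<ge> ereal (real (L p (N div p ^ a) + Tc p a (r - 1) (int N)))"
      by (intro padic_ge[OF pr] Zdvd)
    then show ?thesis unfolding eq s lp nr c by simp
  qed
qed

end
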